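(* Let $\mathcal{G}$ be a finite point group, let $\Phi(l,p,q)$ be a $\mathcal{G}$-symmetric coupling function, i.e. $\Phi(R_{\hat O} l, R_{\hat O} p, R_{\hat O} q)=\Phi(l,p,q)$ for all $\hat O\in\mathcal{G}$, and let $P(l)$ be the bosonic propagator obtained from $\Phi$ by the projection rule $$P_{ij}(l)=\int d\mathbf{p}\,d\mathbf{q}\; f_i\!\left(\mathbf{p}-\tfrac{\mathbf{l}}{2}\right) f_j\!\left(\mathbf{q}\pm\tfrac{\mathbf{l}}{2}\right)\,\Phi\big(l,(l_0/2,\mathbf{p}),(\mp l_0/2,\mathbf{q})\big).$$ Let $\mathcal{K}\subseteq\mathcal{G}$ be a subgroup, suppose the set of form factors is well behaved under $\mathcal{K}$, and fix a momentum $l$ such that $P(R_{\hat O} l)=P(l)$ for all $\hat O\in\mathcal{K}$. Then every non-vanishing irreducible block $P^{\alpha\beta}(l)$ of $P(l)$, with $\alpha,\beta$ labeling irreducible representations of $\mathcal{K}$, is a scalar multiple of the identity matrix.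
   Context: Momenta are $1+D$ vectors $l=(l_0,\mathbf{l})$ with a frequency $l_0$ and a wavevector $\mathbf{l}$ in the Brillouin zone; a point-group element $\hat O$ acts by an orthogonal matrix $R_{\hat O}$ on the wavevector part (leaving frequencies unchanged), and the Brillouin zone is invariant under these maps. Integrals $\int d\mathbf{q}$ run over the whole Brillouin zone with measure normalized so that $\int d\mathbf{q}\,1=1$ (this measure is invariant under $R_{\hat O}$). Form factors $f_i$ are real functions on the Brillouin zone, orthonormal: $\int d\mathbf{q}\, f_i(\mathbf{q}) f_j(\mathbf{q})=\delta_{ij}$. A block of form factors transforms according to a representation $\alpha$ of a group $\mathcal{K}$ if $f_i(R_{\hat O}\mathbf{k})=\sum_{i'}(M^\alpha_{\hat O})_{ii'} f_{i'}(\mathbf{k})$ for all $\hat O\in\mathcal{K}$, with $i'$ in the same block and $M^\alpha_{\hat O}$ the representation matrices. A set of form factors is called well behaved under $\mathcal{K}$ if it is organized into blocks each transforming according to an irreducible representation of $\mathcal{K}$ consisting of unitary matrices, such that any two blocks transform according to either identical (the very same matrices $M_{\hat O}$) or inequivalent irreducible representations. $P^{\alpha\beta}$ denotes the block of $P$ with row indices in a block transforming under $\alpha$ and column indices in a block transforming under $\beta$. In the projection rule the upper signs are used in particle-particle channels and the lower signs in particle-hole channels. *)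

theory Defs
  imports "HOL-Analysis.Analysis" "Jordan_Normal_Form.Matrix"
begin

text \<open>Momenta are pairs (frequency, wavevector); wavevectors live in a Euclidean space 'v
  (dimension D = DIM('v)). A point-group element is identified with the orthogonal map
  it induces on wavevectors.\<close>

definition point_group :: "('v::real_inner \<Rightarrow> 'v) set \<Rightarrow> bool" where
  "point_group G \<longleftrightarrow> finite G \<and> id \<in> G \<and> (\<forall>R\<in>G. orthogonal_transformation R)
     \<and> (\<forall>R\<in>G. \<forall>S\<in>G. R \<circ> S \<in> G) \<and> (\<forall>R\<in>G. inv_into UNIV R \<in> G)"

definition mom_act :: "('v \<Rightarrow> 'v) \<Rightarrow> real \<times> 'v \<Rightarrow> real \<times> 'v" where
  "mom_act R l = (fst l, R (snd l))"

definition bz_measure :: "'v::euclidean_space set \<Rightarrow> 'v measure" where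
  "bz_measure B = uniform_measure lborel B"

definition adj_mat :: "complex mat \<Rightarrow> complex mat" where
  "adj_mat A = mat (dim_col A) (dim_row A) (\<lambda>(i,j). cnj (A $$ (j,i)))"

definition unitary_rep :: "('v \<Rightarrow> 'v) set \<Rightarrow> nat \<Rightarrow> (('v \<Rightarrow> 'v) \<Rightarrow> complex mat) \<Rightarrow> bool" where
  "unitary_rep K d M \<longleftrightarrow>
     (\<forall>g\<in>K. M g \<in> carrier_mat d d \<and> M g * adj_mat (M g) = 1\<^sub>m d)
     \<and> (\<forall>g1\<in>K. \<forall>g2\<in>K. M (g1 \<circ> g2) = M g1 * M g2)"

definition subspace_cv :: "nat \<Rightarrow> complex vec set \<Rightarrow> bool" where
  "subspace_cv d W \<longleftrightarrow> W \<subseteq> carrier_vec d \<and> 0\<^sub>v d \<in> W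
     \<and> (\<forall>v\<in>W. \<forall>w\<in>W. v + w \<in> W) \<and> (\<forall>c. \<forall>v\<in>W. c \<cdot>\<^sub>v v \<in> W)"

definition irreducible_rep :: "('v \<Rightarrow> 'v) set \<Rightarrow> nat \<Rightarrow> (('v \<Rightarrow> 'v) \<Rightarrow> complex mat) \<Rightarrow> bool" where
  "irreducible_rep K d M \<longleftrightarrow> 0 < d \<and>
     (\<forall>W. subspace_cv d W \<and> (\<forall>g\<in>K. \<forall>v\<in>W. M g *\<^sub>v v \<in> W)
          \<longrightarrow> W = {0\<^sub>v d} \<or> W = carrier_vec d)"

definition equivalent_rep :: "('v \<Rightarrow> 'v) set \<Rightarrow> nat \<Rightarrow> (('v \<Rightarrow> 'v) \<Rightarrow> complex mat)
     \<Rightarrow> nat \<Rightarrow> (('v \<Rightarrow> 'v) \<Rightarrow> complex mat) \<Rightarrow> bool" where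
  "equivalent_rep K d M d' M' \<longleftrightarrow> d = d' \<and>
     (\<exists>S\<in>carrier_mat d d. invertible_mat S \<and> (\<forall>g\<in>K. S * M g = M' g * S))"

text \<open>Form factors organized in blocks: block b (b in Blocks) has size d b and contains the
  form factors f b 0, ..., f b (d b - 1); rep b is the representation matrix family of block b.\<close>
definition transforms_by :: "('v \<Rightarrow> 'v) set \<Rightarrow> ('b \<Rightarrow> nat \<Rightarrow> 'v \<Rightarrow> real) \<Rightarrow> ('b \<Rightarrow> nat)
     \<Rightarrow> ('b \<Rightarrow> ('v \<Rightarrow> 'v) \<Rightarrow> complex mat) \<Rightarrow> 'b \<Rightarrow> bool" where
  "transforms_by K f d rep b \<longleftrightarrow> (\<forall>g\<in>K. \<forall>a<d b. \<forall>k.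
      complex_of_real (f b a (g k)) = (\<Sum>a'<d b. rep b g $$ (a,a') * complex_of_real (f b a' k)))"

definition well_behaved :: "('v \<Rightarrow> 'v) set \<Rightarrow> 'b set \<Rightarrow> ('b \<Rightarrow> nat \<Rightarrow> 'v \<Rightarrow> real) \<Rightarrow> ('b \<Rightarrow> nat)
     \<Rightarrow> ('b \<Rightarrow> ('v \<Rightarrow> 'v) \<Rightarrow> complex mat) \<Rightarrow> bool" where
  "well_behaved K Blocks f d rep \<longleftrightarrow>
     (\<forall>b\<in>Blocks. unitary_rep K (d b) (rep b) \<and> irreducible_rep K (d b) (rep b)
                 \<and> transforms_by K f d rep b)
     \<and> (\<forall>b\<in>Blocks. \<forall>b'\<in>Blocks. (\<forall>g\<in>K. rep b g = rep b' g)
                 \<or> \<not> equivalent_rep K (d b) (rep b) (d b') (rep b'))"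

text \<open>Integrand of the projection rule; sigma = 1 (upper signs, particle-particle) or
  sigma = -1 (lower signs, particle-hole).\<close>
definition proj_integrand :: "('b \<Rightarrow> nat \<Rightarrow> 'v::euclidean_space \<Rightarrow> real)
     \<Rightarrow> (real \<times> 'v \<Rightarrow> real \<times> 'v \<Rightarrow> real \<times> 'v \<Rightarrow> complex) \<Rightarrow> real \<Rightarrow> real \<times> 'v
     \<Rightarrow> 'b \<Rightarrow> nat \<Rightarrow> 'b \<Rightarrow> nat \<Rightarrow> 'v \<times> 'v \<Rightarrow> complex" where
  "proj_integrand f \<Phi> \<sigma> l b a b' a' pq =
     complex_of_real (f b a (fst pq - (1/2) *\<^sub>R snd l) * f b' a' (snd pq + (\<sigma>/2) *\<^sub>R snd l))
     * \<Phi> l (fst l / 2, fst pq) (- \<sigma> * fst l / 2, snd pq)"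

definition proj_P :: "'v::euclidean_space set \<Rightarrow> ('b \<Rightarrow> nat \<Rightarrow> 'v \<Rightarrow> real)
     \<Rightarrow> (real \<times> 'v \<Rightarrow> real \<times> 'v \<Rightarrow> real \<times> 'v \<Rightarrow> complex) \<Rightarrow> real \<Rightarrow> real \<times> 'v
     \<Rightarrow> 'b \<Rightarrow> nat \<Rightarrow> 'b \<Rightarrow> nat \<Rightarrow> complex" where
  "proj_P B f \<Phi> \<sigma> l b a b' a' =
     integral\<^sup>L (bz_measure B \<Otimes>\<^sub>M bz_measure B) (proj_integrand f \<Phi> \<sigma> l b a b' a')"

definition P_block :: "('b \<Rightarrow> nat \<Rightarrow> 'b \<Rightarrow> nat \<Rightarrow> complex) \<Rightarrow> ('b \<Rightarrow> nat) \<Rightarrow> 'b \<Rightarrow> 'b \<Rightarrow> complex mat" where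
  "P_block P d b b' = mat (d b) (d b') (\<lambda>(a,a'). P b a b' a')"

end

theory Submission
  imports Defs "Jordan_Normal_Form.Spectral_Radius"
begin

lemma lborel_orth_vec:
  fixes T :: "real^'n::{finite,wellorder} \<Rightarrow> real^'n::_"
  assumes T: "orthogonal_transformation T"
  shows "distr lborel borel T = lborel"
proof -
  have linT: "linear T" using T by (simp add: orthogonal_transformation_linear)
  have Tm: "T \<in> borel_measurable borel"
    using linT by (intro borel_measurable_continuous_onI linear_continuous_on) (simp add: linear_conv_bounded_linear)
  have bij: "bij T" using T orthogonal_transformation_bij by blast
  define Ti where "Ti = inv_into UNIV T"
  have Ti: "orthogonal_transformation Ti" unfolding Ti_def by (rule orthogonal_transformation_inv[OF T])
  have pre: "T -` S = Ti ` S" for S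
    unfolding Ti_def using bij by (auto simp: bij_def surj_f_inv_f inv_f_f image_iff) (metis bij bij_inv_eq_iff)
  show ?thesis
  proof (rule lborel_eqI[symmetric])
    fix l u :: "real^'n::{finite,wellorder}" assume le: "\<And>b. b \<in> Basis \<Longrightarrow> l \<bullet> b \<le> u \<bullet> b"
    have bm: "box l u \<in> lmeasurable" by simp
    have "emeasure (distr lborel borel T) (box l u) = emeasure lborel (T -` box l u)"
      using Tm by (simp add: emeasure_distr)
    also have "\<dots> = emeasure lebesgue (T -` box l u)"
      using Tm by (simp add: emeasure_completion measurable_sets_borel)
    also have "\<dots> = ennreal (measure lebesgue (Ti ` box l u))"
      unfolding pre using measurable_orthogonal_image[OF Ti bm]
      by (simp add: emeasure_eq_measure2 fmeasurableD2)
    also have "\<dots> = ennreal (measure lebesgue (box l u))"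
      using measure_orthogonal_image[OF Ti bm] by simp
    also have "\<dots> = emeasure lebesgue (box l u)" using bm by (simp add: emeasure_eq_measure2)
    also have "\<dots> = emeasure lborel (box l u)" by (simp add: emeasure_completion)
    finally show "emeasure (distr lborel borel T) (box l u) = (\<Prod>b\<in>Basis. (u - l) \<bullet> b)"
      using le by (simp add: emeasure_lborel_box_eq)
  qed simp
qed

typedef (overloaded) ('a::euclidean_space) idx = "{..<DIM('a)}"
  by (rule exI[of _ 0]) simp

instance idx :: (euclidean_space) finite
proof
  have "(UNIV :: 'a idx set) = Abs_idx ` {..<DIM('a)}" by (rule type_definition.univ[OF type_definition_idx])
  then show "finite (UNIV :: 'a idx set)" by (metis finite_imageI finite_lessThan)
qed

instantiation idx :: (euclidean_space) linorder
begin
definition less_eq_idx :: "'a idx \<Rightarrow> 'a idx \<Rightarrow> bool" where "less_eq_idx x y \<longleftrightarrow> Rep_idx x \<le> Rep_idx y"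
definition less_idx :: "'a idx \<Rightarrow> 'a idx \<Rightarrow> bool" where "less_idx x y \<longleftrightarrow> Rep_idx x < Rep_idx y"
instance by standard (auto simp: less_eq_idx_def less_idx_def Rep_idx_inject)
end

instance idx :: (euclidean_space) wellorder
proof
  fix P :: "'a idx \<Rightarrow> bool" and a :: "'a idx"
  assume H: "\<And>x. (\<And>y. y < x \<Longrightarrow> P y) \<Longrightarrow> P x"
  have "\<And>x. Rep_idx x = n \<Longrightarrow> P x" for n
  proof (induct n rule: less_induct)
    case (less n)
    show ?case
      by (rule H) (use less in \<open>auto simp: less_idx_def\<close>)
  qed
  then show "P a" by blast
qed

lemma lborel_orth:
  fixes R :: "'v::euclidean_space \<Rightarrow> 'v"
  assumes R: "orthogonal_transformation R"
  shows "distr lborel borel R = lborel"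
proof -
  obtain e where e: "bij_betw e {..<DIM('v)} (Basis::'v set)"
    using ex_bij_betw_nat_finite[of "Basis::'v set"] by (auto simp: atLeast0LessThan)
  define E where "E = (\<lambda>i::'v idx. e (Rep_idx i))"
  have bijE: "bij_betw E UNIV Basis"
  proof -
    have "bij_betw (Rep_idx :: 'v idx \<Rightarrow> nat) UNIV {..<DIM('v)}"
      unfolding bij_betw_def using type_definition.Rep_range[OF type_definition_idx]
      by (auto simp: inj_on_def Rep_idx_inject)
    from bij_betw_trans[OF this e] show ?thesis by (simp add: E_def comp_def)
  qed
  define \<phi> where "\<phi> = (\<lambda>x::'v. (\<chi> i::'v idx. x \<bullet> E i))"
  define \<psi> where "\<psi> = (\<lambda>y::real^('v idx). \<Sum>i\<in>UNIV. (y $ i) *\<^sub>R E i)"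
  have rngE: "range E = Basis" using bijE by (simp add: bij_betw_def)
  have EB: "E i \<in> Basis" for i using bijE by (auto simp: bij_betw_def)
  have Einj: "E i = E j \<longleftrightarrow> i = j" for i j using bijE by (auto simp: bij_betw_def inj_on_def)
  have EE: "E i \<bullet> E j = (if i = j then 1 else 0)" for i j
    using EB Einj by (simp add: inner_not_same_Basis)
  have phipsi: "\<phi> (\<psi> y) = y" for y
  proof -
    have "(\<Sum>j\<in>UNIV. y $ j * (E j \<bullet> E i)) = y $ i" for i
      by (simp add: EE if_distrib cong: if_cong)
    then show ?thesis unfolding \<phi>_def \<psi>_def
      by (simp add: Finite_Cartesian_Product.vec_eq_iff inner_sum_left)
  qed
  have psiphi: "\<psi> (\<phi> x) = x" for x
  proof -
    have "\<psi> (\<phi> x) = (\<Sum>i\<in>UNIV. (x \<bullet> E i) *\<^sub>R E i)" unfolding \<phi>_def \<psi>_def by simp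
    also have "\<dots> = (\<Sum>b\<in>Basis. (x \<bullet> b) *\<^sub>R b)"
      by (rule sum.reindex_bij_betw[OF bijE])
    also have "\<dots> = x" by (rule euclidean_representation)
    finally show ?thesis .
  qed
  have linphi: "linear \<phi>" unfolding \<phi>_def
    by (rule linearI) (simp_all add: Finite_Cartesian_Product.vec_eq_iff inner_add_left)
  have linpsi: "linear \<psi>" unfolding \<psi>_def
    by (rule linearI) (simp_all add: scaleR_add_left sum.distrib scaleR_sum_right)
  have innphi: "\<phi> x \<bullet> \<phi> y = x \<bullet> y" for x y
  proof -
    have "\<phi> x \<bullet> \<phi> y = (\<Sum>i\<in>UNIV. (x \<bullet> E i) * (y \<bullet> E i))"
      unfolding \<phi>_def by (simp add: inner_vec_def)
    also have "\<dots> = (\<Sum>b\<in>Basis. (x \<bullet> b) * (y \<bullet> b))"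
      by (rule sum.reindex_bij_betw[OF bijE, where g="\<lambda>b. (x \<bullet> b) * (y \<bullet> b)"])
    also have "\<dots> = x \<bullet> y" by (rule euclidean_inner[symmetric])
    finally show ?thesis .
  qed
  have normphi: "norm (\<phi> x) = norm x" for x
    by (simp add: norm_eq_sqrt_inner innphi)
  have normpsi: "norm (\<psi> y) = norm y" for y
    using normphi[of "\<psi> y"] phipsi by simp
  define T where "T = \<phi> \<circ> R \<circ> \<psi>"
  have T: "orthogonal_transformation T"
    unfolding orthogonal_transformation T_def
    using R linphi linpsi by (auto simp: orthogonal_transformation normphi normpsi intro: linear_compose)
  have meas_lin: "linear h \<Longrightarrow> h \<in> borel_measurable borel" for h :: "'c::euclidean_space \<Rightarrow> 'd::euclidean_space"
    by (intro borel_measurable_continuous_onI linear_continuous_on) (simp add: linear_conv_bounded_linear)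
  have Rm: "R \<in> borel_measurable borel" using R meas_lin orthogonal_transformation_linear by blast
  have phim: "\<phi> \<in> borel_measurable borel" using meas_lin linphi by blast
  have psim: "\<psi> \<in> borel_measurable borel" using meas_lin linpsi by blast
  have Tm: "T \<in> borel_measurable borel" using meas_lin T orthogonal_transformation_linear by blast
  have Lv: "distr lborel borel \<psi> = (lborel :: 'v measure)"
  proof (rule lborel_eqI[symmetric])
    fix l u :: 'v assume le: "\<And>b. b \<in> Basis \<Longrightarrow> l \<bullet> b \<le> u \<bullet> b"
    have inpsi: "\<psi> y \<bullet> E i = y $ i" for y i
      unfolding \<psi>_def by (simp add: inner_sum_left EE if_distrib cong: if_cong)
    have pre: "\<psi> -` box l u = box (\<phi> l) (\<phi> u)"
    proof -
      have "\<psi> y \<in> box l u \<longleftrightarrow> (\<forall>i. l \<bullet> E i < y $ i \<and> y $ i < u \<bullet> E i)" for y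
      proof -
        have "\<psi> y \<in> box l u \<longleftrightarrow> (\<forall>i. l \<bullet> E i < \<psi> y \<bullet> E i \<and> \<psi> y \<bullet> E i < u \<bullet> E i)"
          unfolding mem_box rngE[symmetric] by simp
        then show ?thesis by (simp add: inpsi)
      qed
      then show ?thesis unfolding \<phi>_def by (auto simp: mem_box_cart)
    qed
    have "emeasure (distr lborel borel \<psi>) (box l u) = emeasure lborel (box (\<phi> l) (\<phi> u))"
      using psim by (simp add: emeasure_distr pre)
    also have "\<dots> = (\<Prod>i\<in>UNIV. (u - l) \<bullet> E i)"
    proof -
      have "\<forall>b\<in>Basis. \<phi> l \<bullet> b \<le> \<phi> u \<bullet> b"
        using le EB by (auto simp: Basis_vec_def \<phi>_def cart_eq_inner_axis[symmetric] axis_eq_axis)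
      then have "emeasure lborel (box (\<phi> l) (\<phi> u)) = (\<Prod>b\<in>Basis. (\<phi> u - \<phi> l) \<bullet> b)"
        by (simp add: emeasure_lborel_box_eq)
      also have "(\<Prod>b\<in>Basis. (\<phi> u - \<phi> l) \<bullet> b) = (\<Prod>i\<in>UNIV. (u - l) \<bullet> E i)"
      proof -
        have bv: "bij_betw (\<lambda>i::'v idx. axis i (1::real)) UNIV (Basis :: (real^'v idx) set)"
          unfolding bij_betw_def by (auto simp: inj_on_def axis_eq_axis Basis_vec_def)
        have "(\<Prod>b\<in>Basis. (\<phi> u - \<phi> l) \<bullet> b) = (\<Prod>i\<in>UNIV. (\<phi> u - \<phi> l) \<bullet> axis i 1)"
          by (rule prod.reindex_bij_betw[OF bv, symmetric])
        then show ?thesis by (simp add: \<phi>_def inner_diff_left cart_eq_inner_axis[symmetric])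
      qed
      finally show ?thesis by simp
    qed
    also have "(\<Prod>i\<in>UNIV. (u - l) \<bullet> E i) = (\<Prod>b\<in>Basis. (u - l) \<bullet> b)"
      by (rule prod.reindex_bij_betw[OF bijE])
    finally show "emeasure (distr lborel borel \<psi>) (box l u) = (\<Prod>b\<in>Basis. (u - l) \<bullet> b)" .
  qed simp
  have "distr lborel borel R = distr (distr lborel borel \<psi>) borel R" by (simp add: Lv)
  also have "\<dots> = distr lborel borel (R \<circ> \<psi>)" using Rm psim by (simp add: distr_distr)
  also have "R \<circ> \<psi> = \<psi> \<circ> T" unfolding T_def by (auto simp: psiphi)
  also have "distr lborel borel (\<psi> \<circ> T) = distr (distr lborel borel T) borel \<psi>"
    using Tm psim by (simp add: distr_distr)
  also have "\<dots> = lborel" using lborel_orth_vec[OF T] Lv by simp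
  finally show ?thesis .
qed

lemma sets_bz[simp]: "sets (bz_measure B) = sets borel"
  by (simp add: bz_measure_def)

lemma space_bz[simp]: "space (bz_measure B) = UNIV"
  by (simp add: bz_measure_def)

lemma meas_bz_iff: "f \<in> measurable (bz_measure B) N \<longleftrightarrow> f \<in> measurable borel N"
  unfolding measurable_def by simp

lemma finite_bz:
  assumes "B \<in> sets lborel" "0 < emeasure lborel B" "emeasure lborel B < \<infinity>"
  shows "finite_measure (bz_measure B)"
proof (rule finite_measureI)
  have "emeasure (bz_measure B) (space (bz_measure B)) = 1"
  proof -
    have "emeasure (uniform_measure lborel B) UNIV = emeasure (uniform_measure lborel B) B"
      using assms by simp
    also have "\<dots> = 1" using assms by (intro emeasure_uniform_measure_1) auto
    finally show ?thesis by (simp add: bz_measure_def)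
  qed
  then show "emeasure (bz_measure B) (space (bz_measure B)) \<noteq> \<infinity>" by simp
qed

lemma bz_inv:
  fixes R :: "'v::euclidean_space \<Rightarrow> 'v"
  assumes R: "orthogonal_transformation R" and B: "B \<in> sets lborel" and RB: "R ` B = B"
  shows "distr (bz_measure B) (bz_measure B) R = bz_measure B"
proof (rule measure_eqI)
  have Rm: "R \<in> borel_measurable borel"
    using R by (intro borel_measurable_continuous_onI linear_continuous_on)
      (metis linear_conv_bounded_linear orthogonal_transformation_linear)
  have Rm': "R \<in> measurable (bz_measure B) (bz_measure B)"
    using Rm by (simp add: meas_bz_iff measurable_cong_sets[OF refl sets_bz])
  have inj: "inj R" using R orthogonal_transformation_inj by blast
  have preB: "R -` B = B"
  proof -
    have "R -` (R ` B) = B" using inj by (simp add: inj_vimage_image_eq)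
    then show ?thesis using RB by simp
  qed
  show "sets (distr (bz_measure B) (bz_measure B) R) = sets (bz_measure B)" by simp
  fix A assume "A \<in> sets (distr (bz_measure B) (bz_measure B) R)"
  then have A: "A \<in> sets borel" by simp
  have "emeasure (distr (bz_measure B) (bz_measure B) R) A = emeasure (bz_measure B) (R -` A)"
    using Rm' A by (simp add: emeasure_distr)
  also have "\<dots> = emeasure lborel (B \<inter> R -` A) / emeasure lborel B"
    unfolding bz_measure_def using B A Rm by (simp add: measurable_sets_borel)
  also have "B \<inter> R -` A = R -` (B \<inter> A)" using preB by auto
  also have "emeasure lborel (R -` (B \<inter> A)) = emeasure (distr lborel borel R) (B \<inter> A)"
    using Rm A B by (simp add: emeasure_distr)
  also have "\<dots> = emeasure lborel (B \<inter> A)" using lborel_orth[OF R] by simp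
  also have "emeasure lborel (B \<inter> A) / emeasure lborel B = emeasure (bz_measure B) A"
    unfolding bz_measure_def using B A by simp
  finally show "emeasure (distr (bz_measure B) (bz_measure B) R) A = emeasure (bz_measure B) A" .
qed

lemma bz_pair_integral:
  fixes R :: "'v::euclidean_space \<Rightarrow> 'v" and H :: "'v \<times> 'v \<Rightarrow> complex"
  assumes R: "orthogonal_transformation R" and B: "B \<in> sets lborel" and RB: "R ` B = B"
    and Bpos: "0 < emeasure lborel B" and Bfin: "emeasure lborel B < \<infinity>"
    and H: "H \<in> borel_measurable (bz_measure B \<Otimes>\<^sub>M bz_measure B)"
  shows "integral\<^sup>L (bz_measure B \<Otimes>\<^sub>M bz_measure B) (\<lambda>z. H (R (fst z), R (snd z)))
       = integral\<^sup>L (bz_measure B \<Otimes>\<^sub>M bz_measure B) H"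
proof -
  let ?M = "bz_measure B"
  have Rm: "R \<in> borel_measurable borel"
    using R by (intro borel_measurable_continuous_onI linear_continuous_on)
      (metis linear_conv_bounded_linear orthogonal_transformation_linear)
  have Rm': "R \<in> measurable ?M ?M"
    using Rm by (simp add: meas_bz_iff measurable_cong_sets[OF refl sets_bz])
  have sf: "sigma_finite_measure (distr ?M ?M R)"
    using bz_inv[OF R B RB] finite_bz[OF B Bpos Bfin] finite_measure.axioms(1) by metis
  have "distr (?M \<Otimes>\<^sub>M ?M) (?M \<Otimes>\<^sub>M ?M) (\<lambda>(x, y). (R x, R y)) = distr ?M ?M R \<Otimes>\<^sub>M distr ?M ?M R"
    by (rule pair_measure_distr[OF Rm' Rm' sf, symmetric])
  also have "\<dots> = ?M \<Otimes>\<^sub>M ?M" using bz_inv[OF R B RB] by simp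
  finally have D: "distr (?M \<Otimes>\<^sub>M ?M) (?M \<Otimes>\<^sub>M ?M) (\<lambda>(x, y). (R x, R y)) = ?M \<Otimes>\<^sub>M ?M" .
  have gm: "(\<lambda>(x, y). (R x, R y)) \<in> measurable (?M \<Otimes>\<^sub>M ?M) (?M \<Otimes>\<^sub>M ?M)"
    using Rm' by measurable
  have "integral\<^sup>L (?M \<Otimes>\<^sub>M ?M) H = integral\<^sup>L (distr (?M \<Otimes>\<^sub>M ?M) (?M \<Otimes>\<^sub>M ?M) (\<lambda>(x, y). (R x, R y))) H"
    using D by simp
  also have "\<dots> = integral\<^sup>L (?M \<Otimes>\<^sub>M ?M) (\<lambda>z. H ((\<lambda>(x, y). (R x, R y)) z))"
    by (rule integral_distr[OF gm H])
  also have "\<dots> = integral\<^sup>L (?M \<Otimes>\<^sub>M ?M) (\<lambda>z. H (R (fst z), R (snd z)))"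
    by (simp add: case_prod_beta)
  finally show ?thesis by simp
qed
lemma mat_unit_col:
  fixes X :: "complex mat"
  assumes "X \<in> carrier_mat n m" "i < n" "j < m"
  shows "(X *\<^sub>v unit_vec m j) $ i = X $$ (i, j)"
  using assms by (simp add: scalar_prod_def unit_vec_def if_distrib sum.delta' cong: if_cong)

lemma mat_eq_by_cols:
  fixes X :: "complex mat"
  assumes X: "X \<in> carrier_mat n m" and Y: "Y \<in> carrier_mat n m"
    and H: "\<And>j. j < m \<Longrightarrow> X *\<^sub>v unit_vec m j = Y *\<^sub>v unit_vec m j"
  shows "X = Y"
proof (rule eq_matI)
  fix i j assume "i < dim_row Y" "j < dim_col Y"
  then show "X $$ (i, j) = Y $$ (i, j)"
    using mat_unit_col[OF X, of i j] mat_unit_col[OF Y, of i j] H[of j] Y by simp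
qed (use X Y in auto)

lemma smult_one_mat_vec:
  assumes "(w :: complex vec) \<in> carrier_vec n"
  shows "(c \<cdot>\<^sub>m 1\<^sub>m n) *\<^sub>v w = c \<cdot>\<^sub>v w"
proof (rule eq_vecI)
  fix i assume i: "i < dim_vec (c \<cdot>\<^sub>v w)"
  have "((c \<cdot>\<^sub>m 1\<^sub>m n) *\<^sub>v w) $ i = (\<Sum>ia = 0..<n. c * (if ia = i then 1 else 0) * w $ ia)"
    using i assms by (simp add: scalar_prod_def)
  also have "\<dots> = (\<Sum>ia = 0..<n. if ia = i then c * w $ i else 0)" by (rule sum.cong) auto
  also have "\<dots> = c * w $ i" using i assms by simp
  finally show "((c \<cdot>\<^sub>m 1\<^sub>m n) *\<^sub>v w) $ i = (c \<cdot>\<^sub>v w) $ i" using i by simp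
qed (use assms in simp)

lemma kernel_subspace:
  fixes X :: "complex mat"
  assumes X: "X \<in> carrier_mat n m"
  shows "subspace_cv m {v \<in> carrier_vec m. X *\<^sub>v v = 0\<^sub>v n}"
  unfolding subspace_cv_def
proof (intro conjI ballI allI)
  show "0\<^sub>v m \<in> {v \<in> carrier_vec m. X *\<^sub>v v = 0\<^sub>v n}" using X by auto
  fix v w assume v: "v \<in> {v \<in> carrier_vec m. X *\<^sub>v v = 0\<^sub>v n}"
  then show "\<And>c. c \<cdot>\<^sub>v v \<in> {v \<in> carrier_vec m. X *\<^sub>v v = 0\<^sub>v n}"
    using X by (auto simp: mult_mat_vec)
  assume w: "w \<in> {v \<in> carrier_vec m. X *\<^sub>v v = 0\<^sub>v n}"
  show "v + w \<in> {v \<in> carrier_vec m. X *\<^sub>v v = 0\<^sub>v n}"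
    using v w X by (auto simp: mult_add_distrib_mat_vec)
qed auto

lemma schur_scalar:
  fixes A :: "('v \<Rightarrow> 'v) \<Rightarrow> complex mat"
  assumes irr: "irreducible_rep K n A" and Ac: "\<forall>g\<in>K. A g \<in> carrier_mat n n"
    and X: "X \<in> carrier_mat n n" and comm: "\<forall>g\<in>K. A g * X = X * A g"
  shows "\<exists>c. X = c \<cdot>\<^sub>m 1\<^sub>m n"
proof -
  have n: "0 < n" using irr by (simp add: irreducible_rep_def)
  obtain c where "c \<in> spectrum X" using spectrum_non_empty[OF X n] by blast
  then obtain v where ev: "eigenvector X v c"
    by (auto simp: spectrum_def eigenvalue_def)
  have v: "v \<in> carrier_vec n" "v \<noteq> 0\<^sub>v n" "X *\<^sub>v v = c \<cdot>\<^sub>v v"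
    using ev X by (auto simp: eigenvector_def)
  define Y where "Y = X - c \<cdot>\<^sub>m 1\<^sub>m n"
  have Y: "Y \<in> carrier_mat n n" using X unfolding Y_def by (intro minus_carrier_mat smult_carrier_mat one_carrier_mat)
  define W where "W = {w \<in> carrier_vec n. Y *\<^sub>v w = 0\<^sub>v n}"
  have sub: "subspace_cv n W" unfolding W_def by (rule kernel_subspace[OF Y])
  have Yw: "Y *\<^sub>v w = X *\<^sub>v w - c \<cdot>\<^sub>v w" if "w \<in> carrier_vec n" for w
    using that X by (simp add: Y_def minus_mult_distrib_mat_vec smult_one_mat_vec)
  have comY: "A g * Y = Y * A g" if g: "g \<in> K" for g
  proof -
    have Ag: "A g \<in> carrier_mat n n" using Ac g by blast
    have "A g * Y = A g * X - c \<cdot>\<^sub>m (A g * 1\<^sub>m n)"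
      using Ag X mult_smult_distrib[OF Ag one_carrier_mat, of c] by (simp add: Y_def mult_minus_distrib_mat)
    also have "\<dots> = X * A g - c \<cdot>\<^sub>m (1\<^sub>m n * A g)" using comm g Ag by simp
    also have "\<dots> = Y * A g"
      using Ag X mult_smult_assoc_mat[OF one_carrier_mat Ag, of c] by (simp add: Y_def minus_mult_distrib_mat)
    finally show ?thesis .
  qed
  have inv: "\<forall>g\<in>K. \<forall>w\<in>W. A g *\<^sub>v w \<in> W"
  proof (intro ballI)
    fix g w assume g: "g \<in> K" and w: "w \<in> W"
    have Ag: "A g \<in> carrier_mat n n" using Ac g by blast
    have "Y *\<^sub>v (A g *\<^sub>v w) = (Y * A g) *\<^sub>v w" using Ag Y w by (simp add: W_def assoc_mult_mat_vec)
    also have "\<dots> = (A g * Y) *\<^sub>v w" using comY[OF g] by simp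
    also have "\<dots> = A g *\<^sub>v (Y *\<^sub>v w)" by (rule assoc_mult_mat_vec[OF Ag Y]) (use w in \<open>simp add: W_def\<close>)
    also have "\<dots> = 0\<^sub>v n" using w Ag by (auto simp: W_def)
    finally show "A g *\<^sub>v w \<in> W" using Ag w by (simp add: W_def)
  qed
  have "v \<in> W" using v by (simp add: W_def Yw)
  then have "W \<noteq> {0\<^sub>v n}" using v by blast
  then have Wall: "W = carrier_vec n" using irr sub inv by (auto simp: irreducible_rep_def)
  have Y0: "Y = 0\<^sub>m n n"
  proof (rule mat_eq_by_cols[OF Y zero_carrier_mat])
    fix j assume j: "j < n"
    have "unit_vec n j \<in> W" using Wall by simp
    then have "Y *\<^sub>v unit_vec n j = 0\<^sub>v n" by (simp add: W_def)
    moreover have "(0\<^sub>m n n :: complex mat) *\<^sub>v unit_vec n j = 0\<^sub>v n" by (intro eq_vecI) auto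
    ultimately show "Y *\<^sub>v unit_vec n j = 0\<^sub>m n n *\<^sub>v unit_vec n j" by argo
  qed
  have "X = c \<cdot>\<^sub>m 1\<^sub>m n"
  proof (rule eq_matI)
    fix i j assume "i < dim_row (c \<cdot>\<^sub>m 1\<^sub>m n :: complex mat)" "j < dim_col (c \<cdot>\<^sub>m 1\<^sub>m n :: complex mat)"
    then have ij: "i < n" "j < n" by auto
    have "Y $$ (i,j) = 0" using Y0 ij by simp
    then show "X $$ (i,j) = (c \<cdot>\<^sub>m 1\<^sub>m n) $$ (i,j)" using X ij by (simp add: Y_def)
  qed (use X in auto)
  then show ?thesis by blast
qed

definition trc :: "complex mat \<Rightarrow> complex" where
  "trc X = (\<Sum>i<dim_row X. X $$ (i, i))"

lemma trc_comm:
  assumes P: "P \<in> carrier_mat n m" and Q: "Q \<in> carrier_mat m n"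
  shows "trc (P * Q) = trc (Q * P)"
proof -
  have "trc (P * Q) = (\<Sum>i<n. \<Sum>k<m. P $$ (i, k) * Q $$ (k, i))"
    using P Q by (simp add: trc_def scalar_prod_def atLeast0LessThan)
  also have "\<dots> = (\<Sum>k<m. \<Sum>i<n. Q $$ (k, i) * P $$ (i, k))"
    by (subst sum.swap) (simp add: mult.commute)
  also have "\<dots> = trc (Q * P)"
    using P Q by (simp add: trc_def scalar_prod_def atLeast0LessThan)
  finally show ?thesis .
qed

lemma trc_one: "trc (1\<^sub>m n) = of_nat n"
  by (simp add: trc_def)

lemma schur_inequiv:
  fixes A C :: "('v \<Rightarrow> 'v) \<Rightarrow> complex mat"
  assumes irrA: "irreducible_rep K n A" and irrC: "irreducible_rep K m C"
    and Ac: "\<forall>g\<in>K. A g \<in> carrier_mat n n" and Cc: "\<forall>g\<in>K. C g \<in> carrier_mat m m"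
    and P: "P \<in> carrier_mat n m" and comm: "\<forall>g\<in>K. A g * P = P * C g"
    and nz: "P \<noteq> 0\<^sub>m n m"
  shows "equivalent_rep K n A m C"
proof -
  have m: "0 < m" using irrC by (simp add: irreducible_rep_def)
  define Ker where "Ker = {v \<in> carrier_vec m. P *\<^sub>v v = 0\<^sub>v n}"
  have subK: "subspace_cv m Ker" unfolding Ker_def by (rule kernel_subspace[OF P])
  have invK: "\<forall>g\<in>K. \<forall>v\<in>Ker. C g *\<^sub>v v \<in> Ker"
  proof (intro ballI)
    fix g v assume g: "g \<in> K" and v: "v \<in> Ker"
    have Cg: "C g \<in> carrier_mat m m" and Ag: "A g \<in> carrier_mat n n" using Cc Ac g by auto
    have vc: "v \<in> carrier_vec m" using v by (simp add: Ker_def)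
    have "P *\<^sub>v (C g *\<^sub>v v) = (P * C g) *\<^sub>v v" using P Cg vc by (simp add: assoc_mult_mat_vec)
    also have "\<dots> = (A g * P) *\<^sub>v v" using comm g by simp
    also have "\<dots> = A g *\<^sub>v (P *\<^sub>v v)" by (rule assoc_mult_mat_vec[OF Ag P vc])
    also have "\<dots> = 0\<^sub>v n" using v Ag by (auto simp: Ker_def)
    finally show "C g *\<^sub>v v \<in> Ker" using Cg vc by (simp add: Ker_def)
  qed
  have "Ker \<noteq> carrier_vec m"
  proof
    assume H: "Ker = carrier_vec m"
    have "P = 0\<^sub>m n m"
    proof (rule mat_eq_by_cols[OF P zero_carrier_mat])
      fix j assume j: "j < m"
      have "unit_vec m j \<in> Ker" using H by simp
      then have "P *\<^sub>v unit_vec m j = 0\<^sub>v n" by (simp add: Ker_def)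
      moreover have "(0\<^sub>m n m :: complex mat) *\<^sub>v unit_vec m j = 0\<^sub>v n" by (intro eq_vecI) auto
      ultimately show "P *\<^sub>v unit_vec m j = 0\<^sub>m n m *\<^sub>v unit_vec m j" by argo
    qed
    with nz show False by contradiction
  qed
  then have K0: "Ker = {0\<^sub>v m}" using irrC subK invK by (auto simp: irreducible_rep_def)
  have injP: "x = y" if x: "x \<in> carrier_vec m" and y: "y \<in> carrier_vec m" and e: "P *\<^sub>v x = P *\<^sub>v y" for x y
  proof -
    have "P *\<^sub>v (x - y) = P *\<^sub>v x - P *\<^sub>v y" using P x y by (simp add: mult_minus_distrib_mat_vec)
    also have "\<dots> = 0\<^sub>v n" using e P y by auto
    finally have "x - y \<in> Ker" using x y by (simp add: Ker_def)
    then have d: "x - y = 0\<^sub>v m" using K0 by simp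
    show "x = y"
    proof (rule eq_vecI)
      fix i assume i: "i < dim_vec y"
      from arg_cong[OF d, of "\<lambda>v. vec_index v i"] show "vec_index x i = vec_index y i"
        using x y i by simp
    qed (use x y in simp)
  qed
  define Img where "Img = (\<lambda>v. P *\<^sub>v v) ` carrier_vec m"
  have subI: "subspace_cv n Img"
    unfolding subspace_cv_def Img_def
  proof (intro conjI ballI allI)
    show "(\<lambda>v. P *\<^sub>v v) ` carrier_vec m \<subseteq> carrier_vec n" using P by auto
    show "0\<^sub>v n \<in> (\<lambda>v. P *\<^sub>v v) ` carrier_vec m"
    proof
      show "0\<^sub>v n = P *\<^sub>v 0\<^sub>v m" using P by (intro eq_vecI) auto
    qed simp
    fix v w assume "v \<in> (\<lambda>v. P *\<^sub>v v) ` carrier_vec m"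
    then obtain v' where v': "v' \<in> carrier_vec m" "v = P *\<^sub>v v'" by blast
    show "c \<cdot>\<^sub>v v \<in> (\<lambda>v. P *\<^sub>v v) ` carrier_vec m" for c
    proof
      show "c \<cdot>\<^sub>v v = P *\<^sub>v (c \<cdot>\<^sub>v v')" using v' P by (simp add: mult_mat_vec)
    qed (use v' in simp)
    assume "w \<in> (\<lambda>v. P *\<^sub>v v) ` carrier_vec m"
    then obtain w' where w': "w' \<in> carrier_vec m" "w = P *\<^sub>v w'" by blast
    show "v + w \<in> (\<lambda>v. P *\<^sub>v v) ` carrier_vec m"
    proof
      show "v + w = P *\<^sub>v (v' + w')" using v' w' P by (simp add: mult_add_distrib_mat_vec)
    qed (use v' w' in simp)
  qed
  have invI: "\<forall>g\<in>K. \<forall>v\<in>Img. A g *\<^sub>v v \<in> Img"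
  proof (intro ballI)
    fix g v assume g: "g \<in> K" and "v \<in> Img"
    then obtain v' where v': "v' \<in> carrier_vec m" "v = P *\<^sub>v v'" by (auto simp: Img_def)
    have Cg: "C g \<in> carrier_mat m m" and Ag: "A g \<in> carrier_mat n n" using Cc Ac g by auto
    have "A g *\<^sub>v v = (A g * P) *\<^sub>v v'" using v' Ag P by (simp add: assoc_mult_mat_vec)
    also have "\<dots> = (P * C g) *\<^sub>v v'" using comm g by simp
    also have "\<dots> = P *\<^sub>v (C g *\<^sub>v v')" by (rule assoc_mult_mat_vec[OF P Cg v'(1)])
    finally show "A g *\<^sub>v v \<in> Img" using Cg v' by (auto simp: Img_def)
  qed
  have "Img \<noteq> {0\<^sub>v n}"
  proof
    assume H: "Img = {0\<^sub>v n}"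
    have "P *\<^sub>v unit_vec m 0 \<in> Img" by (simp add: Img_def)
    then have e0: "P *\<^sub>v unit_vec m 0 = P *\<^sub>v 0\<^sub>v m"
      using H P by (auto intro!: eq_vecI)
    have "(unit_vec m 0 :: complex vec) = 0\<^sub>v m" by (rule injP) (use e0 in auto)
    then show False using m unit_vec_nonzero[of 0 m] by auto
  qed
  then have Iall: "Img = carrier_vec n" using irrA subI invI by (auto simp: irreducible_rep_def)
  have "\<forall>j. \<exists>v. j < n \<longrightarrow> v \<in> carrier_vec m \<and> P *\<^sub>v v = unit_vec n j"
  proof (intro allI impI)
    fix j
    show "\<exists>v. j < n \<longrightarrow> v \<in> carrier_vec m \<and> P *\<^sub>v v = unit_vec n j"
    proof (cases "j < n")
      case True
      then have "unit_vec n j \<in> Img" using Iall by simp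
      then show ?thesis by (auto simp: Img_def)
    qed simp
  qed
  then obtain pre where pre: "\<And>j. j < n \<Longrightarrow> pre j \<in> carrier_vec m \<and> P *\<^sub>v pre j = unit_vec n j"
    by metis
  define Q where "Q = mat m n (\<lambda>(i, j). pre j $ i)"
  have Q: "Q \<in> carrier_mat m n" by (simp add: Q_def)
  have Qcol: "Q *\<^sub>v unit_vec n j = pre j" if j: "j < n" for j
  proof (rule eq_vecI)
    fix i assume "i < dim_vec (pre j)"
    then have i: "i < m" using pre[OF j] by auto
    show "(Q *\<^sub>v unit_vec n j) $ i = pre j $ i"
      using mat_unit_col[OF Q i j] i j by (simp add: Q_def)
  qed (use pre[OF j] Q in auto)
  have PQ: "P * Q = 1\<^sub>m n"
  proof (rule mat_eq_by_cols[OF mult_carrier_mat[OF P Q] one_carrier_mat])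
    fix j assume j: "j < n"
    have "(P * Q) *\<^sub>v unit_vec n j = P *\<^sub>v (Q *\<^sub>v unit_vec n j)"
      by (rule assoc_mult_mat_vec[OF P Q]) simp
    also have "\<dots> = unit_vec n j" using Qcol[OF j] pre[OF j] by simp
    finally show "(P * Q) *\<^sub>v unit_vec n j = 1\<^sub>m n *\<^sub>v unit_vec n j" by simp
  qed
  have QP: "Q * P = 1\<^sub>m m"
  proof (rule mat_eq_by_cols[OF mult_carrier_mat[OF Q P] one_carrier_mat])
    fix j assume j: "j < m"
    have c1: "(Q * P) *\<^sub>v unit_vec m j \<in> carrier_vec m" using Q P by simp
    have "P *\<^sub>v ((Q * P) *\<^sub>v unit_vec m j) = (P * (Q * P)) *\<^sub>v unit_vec m j"
      by (rule assoc_mult_mat_vec[symmetric, OF P mult_carrier_mat[OF Q P]]) simp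
    also have "P * (Q * P) = (P * Q) * P" using P Q by (simp add: assoc_mult_mat)
    also have "\<dots> = P" using PQ P by simp
    finally have "(Q * P) *\<^sub>v unit_vec m j = unit_vec m j" using injP[OF c1] by simp
    then show "(Q * P) *\<^sub>v unit_vec m j = 1\<^sub>m m *\<^sub>v unit_vec m j" by simp
  qed
  have "of_nat n = (of_nat m :: complex)"
    using trc_comm[OF P Q] PQ QP by (simp add: trc_one)
  then have nm: "n = m" by simp
  have eq: "Q * A g = C g * Q" if g: "g \<in> K" for g
  proof -
    have Cg: "C g \<in> carrier_mat m m" and Ag: "A g \<in> carrier_mat n n" using Cc Ac g by auto
    have a1: "Q * A g * P = Q * (A g * P)" using assoc_mult_mat[OF Q Ag P] .
    have a2: "Q * (P * C g) = (Q * P) * C g" using assoc_mult_mat[OF Q P Cg] by simp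
    have "Q * A g = Q * A g * (P * Q)" using Q Ag PQ by simp
    also have "\<dots> = (Q * A g * P) * Q" using assoc_mult_mat[OF mult_carrier_mat[OF Q Ag] P Q] by simp
    also have "\<dots> = Q * (P * C g) * Q" using comm g a1 by simp
    also have "\<dots> = (Q * P) * C g * Q" using a2 by simp
    also have "\<dots> = C g * Q" using QP Cg Q by simp
    finally show ?thesis .
  qed
  have "invertible_mat Q"
    unfolding invertible_mat_def inverts_mat_def using Q PQ QP P nm by auto
  then show ?thesis unfolding equivalent_rep_def using nm Q eq by auto
qed

theorem corollary3:
  fixes G K :: "('v::euclidean_space \<Rightarrow> 'v) set"
    and B :: "'v set"
    and \<Phi> :: "real \<times> 'v \<Rightarrow> real \<times> 'v \<Rightarrow> real \<times> 'v \<Rightarrow> complex"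
    and \<sigma> :: real
    and Blocks :: "'b set"
    and f :: "'b \<Rightarrow> nat \<Rightarrow> 'v \<Rightarrow> real"
    and d :: "'b \<Rightarrow> nat"
    and rep :: "'b \<Rightarrow> ('v \<Rightarrow> 'v) \<Rightarrow> complex mat"
    and l :: "real \<times> 'v"
  assumes G: "point_group G"
    and B_meas: "B \<in> sets lborel"
    and B_pos: "0 < emeasure lborel B" and B_fin: "emeasure lborel B < \<infinity>"
    and B_inv: "\<forall>R\<in>G. R ` B = B"
    and ff_meas: "\<forall>b\<in>Blocks. \<forall>a<d b. f b a \<in> borel_measurable borel"
    and ff_orth: "\<forall>b\<in>Blocks. \<forall>a<d b. \<forall>b'\<in>Blocks. \<forall>a'<d b'.
        (LINT k|bz_measure B. f b a k * f b' a' k) = (if b = b' \<and> a = a' then 1 else 0)"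
    and \<Phi>_sym: "\<forall>R\<in>G. \<forall>l p q. \<Phi> (mom_act R l) (mom_act R p) (mom_act R q) = \<Phi> l p q"
    and sign: "\<sigma> = 1 \<or> \<sigma> = -1"
    and K: "K \<subseteq> G" "point_group K"
    and wb: "well_behaved K Blocks f d rep"
    and integrable: "\<forall>b\<in>Blocks. \<forall>a<d b. \<forall>b'\<in>Blocks. \<forall>a'<d b'.
        integrable (bz_measure B \<Otimes>\<^sub>M bz_measure B) (proj_integrand f \<Phi> \<sigma> l b a b' a')"
    and P_inv: "\<forall>g\<in>K. \<forall>b\<in>Blocks. \<forall>a<d b. \<forall>b'\<in>Blocks. \<forall>a'<d b'.
        proj_P B f \<Phi> \<sigma> (mom_act g l) b a b' a' = proj_P B f \<Phi> \<sigma> l b a b' a'"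
  shows "\<forall>b\<in>Blocks. \<forall>b'\<in>Blocks.
           P_block (proj_P B f \<Phi> \<sigma> l) d b b' \<noteq> 0\<^sub>m (d b) (d b') \<longrightarrow>
           (\<exists>c. P_block (proj_P B f \<Phi> \<sigma> l) d b b' = c \<cdot>\<^sub>m 1\<^sub>m (d b))"
proof (intro ballI impI)
  fix b b' assume b: "b \<in> Blocks" and b': "b' \<in> Blocks"
  let ?P = "proj_P B f \<Phi> \<sigma>"
  define Pm where "Pm = P_block (?P l) d b b'"
  assume nz0: "P_block (proj_P B f \<Phi> \<sigma> l) d b b' \<noteq> 0\<^sub>m (d b) (d b')"
  then have nz: "Pm \<noteq> 0\<^sub>m (d b) (d b')" by (simp add: Pm_def)
  have Pm: "Pm \<in> carrier_mat (d b) (d b')" by (simp add: Pm_def P_block_def)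
  have Pm_idx: "Pm $$ (a, a') = ?P l b a b' a'" if "a < d b" "a' < d b'" for a a'
    using that by (simp add: Pm_def P_block_def)
  have Kid: "id \<in> K" and Korth: "\<forall>R\<in>K. orthogonal_transformation R"
    and Kinv: "\<forall>R\<in>K. inv_into UNIV R \<in> K"
    using K(2) unfolding point_group_def by auto
  have wbb: "unitary_rep K (d c) (rep c) \<and> irreducible_rep K (d c) (rep c) \<and> transforms_by K f d rep c"
    if "c \<in> Blocks" for c
    using wb that unfolding well_behaved_def by blast
  have fm: "f c a \<in> borel_measurable (bz_measure B)" if "c \<in> Blocks" "a < d c" for c a
    using ff_meas that meas_bz_iff by blast
  have sqint: "integrable (bz_measure B) (\<lambda>k. f c a k * f c a k)" if c: "c \<in> Blocks" and a: "a < d c" for c a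
  proof (rule ccontr)
    assume "\<not> integrable (bz_measure B) (\<lambda>k. f c a k * f c a k)"
    then have "(LINT k|bz_measure B. f c a k * f c a k) = 0" by (rule not_integrable_integral_eq)
    moreover have "(LINT k|bz_measure B. f c a k * f c a k) = 1" using ff_orth c a by auto
    ultimately show False by simp
  qed
  have prodint: "integrable (bz_measure B) (\<lambda>k. f c a k * f c' a' k)"
    if c: "c \<in> Blocks" and a: "a < d c" and c': "c' \<in> Blocks" and a': "a' < d c'" for c a c' a'
  proof (rule Bochner_Integration.integrable_bound[OF Bochner_Integration.integrable_add[OF sqint[OF c a] sqint[OF c' a']]])
    show "(\<lambda>k. f c a k * f c' a' k) \<in> borel_measurable (bz_measure B)"
      by (intro borel_measurable_times fm c a c' a')
    show "AE k in bz_measure B. norm (f c a k * f c' a' k) \<le> norm (f c a k * f c a k + f c' a' k * f c' a' k)"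
    proof (intro AE_I2)
      fix k
      have "0 \<le> (\<bar>f c a k\<bar> - \<bar>f c' a' k\<bar>)^2" by simp
      then have "2 * (\<bar>f c a k\<bar> * \<bar>f c' a' k\<bar>) \<le> \<bar>f c a k\<bar> * \<bar>f c a k\<bar> + \<bar>f c' a' k\<bar> * \<bar>f c' a' k\<bar>"
        by (simp add: power2_eq_square algebra_simps)
      moreover have "0 \<le> \<bar>f c a k\<bar> * \<bar>f c' a' k\<bar>" by simp
      ultimately have h: "\<bar>f c a k\<bar> * \<bar>f c' a' k\<bar> \<le> f c a k * f c a k + f c' a' k * f c' a' k"
        using abs_mult_self_eq[of "f c a k"] abs_mult_self_eq[of "f c' a' k"] by linarith
      have nn: "0 \<le> f c a k * f c a k + f c' a' k * f c' a' k" by simp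
      show "norm (f c a k * f c' a' k) \<le> norm (f c a k * f c a k + f c' a' k * f c' a' k)"
        using h nn by (simp add: abs_mult)
    qed
  qed
  have realrep: "rep c g $$ (a, e) = complex_of_real (LINT k|bz_measure B. f c a (g k) * f c e k)"
    if c: "c \<in> Blocks" and g: "g \<in> K" and a: "a < d c" and e: "e < d c" for c g a e
  proof -
    have tr: "complex_of_real (f c a (g k)) = (\<Sum>a'<d c. rep c g $$ (a,a') * complex_of_real (f c a' k))" for k
      using wbb[OF c] g a unfolding transforms_by_def by blast
    have pw: "complex_of_real (f c a (g k) * f c e k)
        = (\<Sum>a'<d c. rep c g $$ (a,a') * complex_of_real (f c a' k * f c e k))" for k
      using tr[of k] by (simp add: sum_distrib_right mult.assoc)
    have "complex_of_real (LINT k|bz_measure B. f c a (g k) * f c e k)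
        = (LINT k|bz_measure B. complex_of_real (f c a (g k) * f c e k))"
      by (rule integral_complex_of_real[symmetric])
    also have "\<dots> = (LINT k|bz_measure B. (\<Sum>a'<d c. rep c g $$ (a,a') * complex_of_real (f c a' k * f c e k)))"
      by (simp only: pw)
    also have "\<dots> = (\<Sum>a'<d c. LINT k|bz_measure B. rep c g $$ (a,a') * complex_of_real (f c a' k * f c e k))"
      by (rule Bochner_Integration.integral_sum, rule Bochner_Integration.integrable_mult_right,
          rule integrable_of_real, rule prodint[OF c _ c e]) simp
    also have "\<dots> = (\<Sum>a'<d c. rep c g $$ (a,a') * complex_of_real (LINT k|bz_measure B. f c a' k * f c e k))"
      by (rule sum.cong[OF refl]) (simp only: integral_mult_right_zero integral_complex_of_real)
    also have "\<dots> = (\<Sum>a'<d c. if a' = e then rep c g $$ (a,a') else 0)"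
      by (rule sum.cong) (use ff_orth c e in auto)
    also have "\<dots> = rep c g $$ (a, e)" using e by simp
    finally show ?thesis by simp
  qed
  have gS: "g (inv_into UNIV g x) = x" if "g \<in> K" for g x
    using Korth that orthogonal_transformation_bij by (metis bij_betw_imp_surj_on surj_f_inv_f)
  have covar: "?P (mom_act g l) b a b' a'
      = (\<Sum>a1<d b. \<Sum>a2<d b'. rep b g $$ (a,a1) * rep b' g $$ (a',a2) * ?P l b a1 b' a2)"
    if g: "g \<in> K" and a: "a < d b" and a': "a' < d b'" for g a a'
  proof -
    define S where "S = inv_into UNIV g"
    have gorth: "orthogonal_transformation g" using Korth g by blast
    have lin: "linear g" using gorth orthogonal_transformation_linear by blast
    have Sorth: "orthogonal_transformation S" unfolding S_def
      using orthogonal_transformation_inv[OF gorth] by simp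
    have SK: "S \<in> K" using Kinv g by (simp add: S_def)
    have SB: "S ` B = B" using B_inv SK K(1) by blast
    have gG: "g \<in> G" using g K(1) by blast
    define H where "H = (\<lambda>z. \<Sum>a1<d b. \<Sum>a2<d b'. rep b g $$ (a,a1) * rep b' g $$ (a',a2) * proj_integrand f \<Phi> \<sigma> l b a1 b' a2 z)"
    have Hint: "integrable (bz_measure B \<Otimes>\<^sub>M bz_measure B) H"
      unfolding H_def using b b' integrable by (intro Bochner_Integration.integrable_sum Bochner_Integration.integrable_mult_right) auto
    have trb: "complex_of_real (f b a (g k)) = (\<Sum>a1<d b. rep b g $$ (a,a1) * complex_of_real (f b a1 k))" for k
      using wbb[OF b] g a unfolding transforms_by_def by blast
    have trb': "complex_of_real (f b' a' (g k)) = (\<Sum>a2<d b'. rep b' g $$ (a',a2) * complex_of_real (f b' a2 k))" for k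
      using wbb[OF b'] g a' unfolding transforms_by_def by blast
    have pw: "proj_integrand f \<Phi> \<sigma> (mom_act g l) b a b' a' z = H (S (fst z), S (snd z))" for z
    proof -
      obtain x y where z: "z = (x, y)" by force
      define p where "p = S x"
      define q where "q = S y"
      have x: "x = g p" and y: "y = g q" using gS[OF g] by (simp_all add: p_def q_def S_def)
      have e1: "x - (1/2) *\<^sub>R snd (mom_act g l) = g (p - (1/2) *\<^sub>R snd l)"
        using lin by (simp add: x mom_act_def real_vector.linear_diff real_vector.linear_scale)
      have e2: "y + (\<sigma>/2) *\<^sub>R snd (mom_act g l) = g (q + (\<sigma>/2) *\<^sub>R snd l)"
        using lin by (simp add: y mom_act_def real_vector.linear_add real_vector.linear_scale)
      have e3: "\<Phi> (mom_act g l) (fst (mom_act g l) / 2, x) (- \<sigma> * fst (mom_act g l) / 2, y)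
          = \<Phi> l (fst l / 2, p) (- \<sigma> * fst l / 2, q)"
      proof -
        have "\<Phi> (mom_act g l) (fst (mom_act g l) / 2, x) (- \<sigma> * fst (mom_act g l) / 2, y)
           = \<Phi> (mom_act g l) (mom_act g (fst l / 2, p)) (mom_act g (- \<sigma> * fst l / 2, q))"
          by (simp add: mom_act_def x y)
        also have "\<dots> = \<Phi> l (fst l / 2, p) (- \<sigma> * fst l / 2, q)" using \<Phi>_sym gG by blast
        finally show ?thesis .
      qed
      have "proj_integrand f \<Phi> \<sigma> (mom_act g l) b a b' a' z
          = complex_of_real (f b a (g (p - (1/2) *\<^sub>R snd l))) * complex_of_real (f b' a' (g (q + (\<sigma>/2) *\<^sub>R snd l)))
            * \<Phi> l (fst l / 2, p) (- \<sigma> * fst l / 2, q)"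
        unfolding proj_integrand_def z fst_conv snd_conv e1 e2 e3 by simp
      also have "\<dots> = (\<Sum>a1<d b. rep b g $$ (a,a1) * complex_of_real (f b a1 (p - (1/2) *\<^sub>R snd l)))
            * (\<Sum>a2<d b'. rep b' g $$ (a',a2) * complex_of_real (f b' a2 (q + (\<sigma>/2) *\<^sub>R snd l)))
            * \<Phi> l (fst l / 2, p) (- \<sigma> * fst l / 2, q)"
        unfolding trb trb' ..
      also have "\<dots> = (\<Sum>a1<d b. \<Sum>a2<d b'. (rep b g $$ (a,a1) * complex_of_real (f b a1 (p - (1/2) *\<^sub>R snd l)))
            * (rep b' g $$ (a',a2) * complex_of_real (f b' a2 (q + (\<sigma>/2) *\<^sub>R snd l)))
            * \<Phi> l (fst l / 2, p) (- \<sigma> * fst l / 2, q))"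
        by (subst sum_product) (simp only: sum_distrib_right)
      also have "\<dots> = H (p, q)"
        unfolding H_def proj_integrand_def fst_conv snd_conv
        by (intro sum.cong refl) (simp add: mult_ac)
      finally show ?thesis by (simp add: z p_def q_def)
    qed
    have "?P (mom_act g l) b a b' a' = integral\<^sup>L (bz_measure B \<Otimes>\<^sub>M bz_measure B) (\<lambda>z. H (S (fst z), S (snd z)))"
    proof -
      have "proj_integrand f \<Phi> \<sigma> (mom_act g l) b a b' a' = (\<lambda>z. H (S (fst z), S (snd z)))"
        by (rule ext) (rule pw)
      then show ?thesis unfolding proj_P_def by simp
    qed
    also have "\<dots> = integral\<^sup>L (bz_measure B \<Otimes>\<^sub>M bz_measure B) H"
      by (rule bz_pair_integral[OF Sorth B_meas SB B_pos B_fin borel_measurable_integrable[OF Hint]])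
    also have "\<dots> = (\<Sum>a1<d b. \<Sum>a2<d b'. rep b g $$ (a,a1) * rep b' g $$ (a',a2) * ?P l b a1 b' a2)"
      unfolding H_def proj_P_def using b b' integrable
      by (subst Bochner_Integration.integral_sum, fastforce intro!: Bochner_Integration.integrable_sum Bochner_Integration.integrable_mult_right)
         (intro sum.cong refl, subst Bochner_Integration.integral_sum, auto simp: integral_mult_right_zero)
    finally show ?thesis .
  qed
  have comm: "rep b g * Pm = Pm * rep b' g" if g: "g \<in> K" for g
  proof -
    define A where "A = rep b g"
    define C where "C = rep b' g"
    have A: "A \<in> carrier_mat (d b) (d b)" using wbb[OF b] g by (simp add: A_def unitary_rep_def)
    have C: "C \<in> carrier_mat (d b') (d b')" using wbb[OF b'] g by (simp add: C_def unitary_rep_def)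
    have CU: "C * Defs.adj_mat C = 1\<^sub>m (d b')" using wbb[OF b'] g by (simp add: C_def unitary_rep_def)
    have adjC: "Defs.adj_mat C \<in> carrier_mat (d b') (d b')" using C by (simp add: Defs.adj_mat_def)
    have CT: "transpose_mat C = Defs.adj_mat C"
    proof (rule eq_matI)
      fix i j assume "i < dim_row (Defs.adj_mat C)" "j < dim_col (Defs.adj_mat C)"
      then have ij: "i < d b'" "j < d b'" using adjC by auto
      show "transpose_mat C $$ (i, j) = Defs.adj_mat C $$ (i, j)"
        using ij C realrep[OF b' g ij(2) ij(1)] by (simp add: Defs.adj_mat_def C_def)
    qed (use C adjC in auto)
    have CTC: "transpose_mat C * C = 1\<^sub>m (d b')"
      unfolding CT by (rule mat_mult_left_right_inverse[OF C adjC CU])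
    have eqP: "Pm = A * Pm * transpose_mat C"
    proof (rule eq_matI)
      fix i j assume "i < dim_row (A * Pm * transpose_mat C)" "j < dim_col (A * Pm * transpose_mat C)"
      then have i: "i < d b" and j: "j < d b'" using A C Pm by auto
      have "(A * Pm * transpose_mat C) $$ (i, j)
          = (\<Sum>t<d b. A $$ (i,t) * (\<Sum>k<d b'. Pm $$ (t,k) * C $$ (j,k)))"
        using A C Pm i j by (simp add: scalar_prod_def atLeast0LessThan)
      also have "\<dots> = (\<Sum>t<d b. \<Sum>k<d b'. A $$ (i,t) * C $$ (j,k) * ?P l b t b' k)"
        unfolding sum_distrib_left by (intro sum.cong refl) (simp add: Pm_idx mult_ac)
      also have "\<dots> = ?P (mom_act g l) b i b' j"
        using covar[OF g i j] by (simp add: A_def C_def)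
      also have "\<dots> = Pm $$ (i, j)" using P_inv g b b' i j Pm_idx by simp
      finally show "Pm $$ (i, j) = (A * Pm * transpose_mat C) $$ (i, j)" by simp
    qed (use A C Pm in auto)
    have "Pm * C = (A * Pm * transpose_mat C) * C" using eqP by simp
    also have "\<dots> = (A * Pm) * (transpose_mat C * C)"
      using assoc_mult_mat[OF mult_carrier_mat[OF A Pm] transpose_carrier_mat[THEN iffD2, OF C] C] by simp
    also have "\<dots> = A * Pm" using CTC A Pm by simp
    finally show ?thesis by (simp add: A_def C_def)
  qed
  have Ac: "\<forall>g\<in>K. rep b g \<in> carrier_mat (d b) (d b)" using wbb[OF b] by (simp add: unitary_rep_def)
  have Cc: "\<forall>g\<in>K. rep b' g \<in> carrier_mat (d b') (d b')" using wbb[OF b'] by (simp add: unitary_rep_def)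
  have "(\<forall>g\<in>K. rep b g = rep b' g) \<or> \<not> equivalent_rep K (d b) (rep b) (d b') (rep b')"
    using wb b b' unfolding well_behaved_def by blast
  then show "\<exists>c. P_block (proj_P B f \<Phi> \<sigma> l) d b b' = c \<cdot>\<^sub>m 1\<^sub>m (d b)"
  proof
    assume same: "\<forall>g\<in>K. rep b g = rep b' g"
    have "d b = d b'" using Ac Cc Kid same by (metis carrier_matD(1))
    then have Pm': "Pm \<in> carrier_mat (d b) (d b)" using Pm by simp
    have "\<exists>c. Pm = c \<cdot>\<^sub>m 1\<^sub>m (d b)"
      by (rule schur_scalar[OF _ Ac Pm']) (use wbb[OF b] comm same in auto)
    then show ?thesis by (simp add: Pm_def)
  next
    assume ne: "\<not> equivalent_rep K (d b) (rep b) (d b') (rep b')"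
    have "equivalent_rep K (d b) (rep b) (d b') (rep b')"
      by (rule schur_inequiv[OF _ _ Ac Cc Pm _ nz]) (use wbb[OF b] wbb[OF b'] comm in auto)
    with ne show ?thesis by contradiction
  qed
qed

end
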